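(* Let $A$ be a real unital $^*$-algebra with underlying vector space $\mathbb{R}^n$ whose Hermitian elements are real, and let $N(s)=ss^*$ be its Algebraic Norm. Then, on a sufficiently small neighborhood of $\mathbf{1}$, $N(s)$ is the square of a special unital norm of $A$; that is, $\sqrt{N(s)}$ is a special unital norm.
   Context: $A$ is a real unital algebra (bilinear product, not necessarily associative) on $\mathbb{R}^n$ with the standard basis, equipped with an involutive antiautomorphism $s\mapsto s^*$ (linear, $(st)^*=t^*s^*$, $s^{**}=s$) such that every $s$ with $s^*=s$ is a real multiple of the identity $\mathbf{1}$; then $ss^*=s^*s$ is real, and for $ss^*\neq0$ the inverse is $s^{-1}=s^*/(ss^* )$. The Algebraic Norm is $N(s)=ss^*\in\mathbb{R}$. For these algebras one sets $\|\mathbf{1}\|^2=1$. With $s$ a column vector, $\mathbf{d}s$ the column of coordinate differentials and "$\cdot$" the Euclidean dot product: a normalized uncurling metric is a real symmetric $n\times n$ matrix $L$ with $d\big((s^{-1})^TL\,\mathbf{d}s\big)=0$ on an open ball centered at $\mathbf{1}$ consisting of units and with $s^TLs^{-1}=\|\mathbf{1}\|^2$ near $\mathbf{1}$; the associated special unital norm is $\ell_{\rm sp}(s)=\exp\!\big(\frac{1}{\|\mathbf{1}\|^2}\int_{\mathbf{1}}^s[Lt^{-1}]\cdot\mathbf{d}t\big)$ near $\mathbf{1}$. *)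

theory Defs
  imports "HOL-Analysis.Analysis"
begin

definition real_unital_star_alg ::
  "(real^'n \<Rightarrow> real^'n \<Rightarrow> real^'n) \<Rightarrow> real^'n \<Rightarrow> (real^'n \<Rightarrow> real^'n) \<Rightarrow> bool" where
  "real_unital_star_alg mul e star \<longleftrightarrow>
     bilinear mul \<and> (\<forall>x. mul e x = x \<and> mul x e = x) \<and>
     linear star \<and> (\<forall>s t. star (mul s t) = mul (star t) (star s)) \<and>
     (\<forall>s. star (star s) = s) \<and>
     (\<forall>s. star s = s \<longrightarrow> (\<exists>c::real. s = c *\<^sub>R e))"

definition alg_norm ::
  "(real^'n \<Rightarrow> real^'n \<Rightarrow> real^'n) \<Rightarrow> real^'n \<Rightarrow> (real^'n \<Rightarrow> real^'n) \<Rightarrow> real^'n \<Rightarrow> real" where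
  "alg_norm mul e star s = (THE c::real. mul s (star s) = c *\<^sub>R e)"

definition alg_inv ::
  "(real^'n \<Rightarrow> real^'n \<Rightarrow> real^'n) \<Rightarrow> real^'n \<Rightarrow> (real^'n \<Rightarrow> real^'n) \<Rightarrow> real^'n \<Rightarrow> real^'n" where
  "alg_inv mul e star s = (1 / alg_norm mul e star s) *\<^sub>R star s"

text \<open>Normalized uncurling metric: symmetric L; on an open ball around e consisting of
  units the 1-form (L s^{-1}) . ds is closed (Jacobian of s |-> L s^{-1} symmetric);
  and s^T L s^{-1} = ||1||^2 = 1 near e.\<close>
definition normalized_uncurling_metric ::
  "(real^'n \<Rightarrow> real^'n \<Rightarrow> real^'n) \<Rightarrow> real^'n \<Rightarrow> (real^'n \<Rightarrow> real^'n) \<Rightarrow> real^'n^'n \<Rightarrow> bool" where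
  "normalized_uncurling_metric mul e star L \<longleftrightarrow>
     transpose L = L \<and>
     (\<exists>r>0. (\<forall>s\<in>ball e r. alg_norm mul e star s \<noteq> 0) \<and>
            (\<forall>s\<in>ball e r. \<exists>F'. ((\<lambda>t. L *v alg_inv mul e star t) has_derivative F') (at s) \<and>
                 (\<forall>i j. F' (axis j 1) $ i = F' (axis i 1) $ j))) \<and>
     (\<forall>\<^sub>F s in nhds e. s \<bullet> (L *v alg_inv mul e star s) = 1)"

text \<open>Special unital norm exp(int_e^s (L t^{-1}) . dt), the line integral taken along the
  straight segment from e to s (path independent on the ball, the form being closed).\<close>
definition special_unital_norm ::
  "(real^'n \<Rightarrow> real^'n \<Rightarrow> real^'n) \<Rightarrow> real^'n \<Rightarrow> (real^'n \<Rightarrow> real^'n) \<Rightarrow> real^'n^'n \<Rightarrow> real^'n \<Rightarrow> real" where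
  "special_unital_norm mul e star L s =
     exp (integral {0..1} (\<lambda>\<tau>::real. (L *v alg_inv mul e star (e + \<tau> *\<^sub>R (s - e))) \<bullet> (s - e)))"

end

theory Submission
  imports Defs
begin

lemma matrix_apply_lin:
  fixes f :: "real^'n \<Rightarrow> real^'m"
  assumes "linear f" shows "matrix f *v x = f x"
  using matrix_vector_mul(2)[OF assms] by metis

theorem proposition10p8:
  fixes mul :: "real^'n \<Rightarrow> real^'n \<Rightarrow> real^'n" and e :: "real^'n"
    and star :: "real^'n \<Rightarrow> real^'n"
  assumes "real_unital_star_alg mul e star"
  shows "\<exists>L. normalized_uncurling_metric mul e star L \<and>
           (\<forall>\<^sub>F s in nhds e. special_unital_norm mul e star L s = sqrt (alg_norm mul e star s))"
proof -
  have bil: "bilinear mul" and le: "\<And>x. mul e x = x" and re: "\<And>x. mul x e = x"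
    and lst: "linear star" and anti: "\<And>s t. star (mul s t) = mul (star t) (star s)"
    and inv: "\<And>s. star (star s) = s" and herm: "\<And>s. star s = s \<Longrightarrow> \<exists>c::real. s = c *\<^sub>R e"
    using assms unfolding real_unital_star_alg_def by auto
  interpret bb: bounded_bilinear mul using bil bilinear_conv_bounded_bilinear by blast
  interpret st: linear star by (rule lst)
  have enz: "e \<noteq> 0"
  proof
    assume "e = 0"
    then have "axis undefined (1::real) = (0::real^'n)" using le[of "axis undefined 1"] by (simp add: bb.zero_left)
    then show False by (simp add: axis_eq_0_iff)
  qed
  then have ee: "e \<bullet> e > 0" by simp
  define M where "M x y = mul x (star y) + mul y (star x)" for x y
  define Bf where "Bf x y = (M x y \<bullet> e) / (2 * (e \<bullet> e))" for x y
  have Mherm: "M x y = (2 * Bf x y) *\<^sub>R e" for x y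
  proof -
    have "star (M x y) = M x y" unfolding M_def by (simp add: st.add anti inv add.commute)
    then obtain c where c: "M x y = c *\<^sub>R e" using herm by blast
    then have "Bf x y = c / 2" unfolding Bf_def using ee by (simp add: field_simps)
    then show ?thesis using c by simp
  qed
  have Msym: "M x y = M y x" for x y unfolding M_def by simp
  have Bsym: "Bf x y = Bf y x" for x y unfolding Bf_def using Msym by simp
  have Nsq: "mul s (star s) = Bf s s *\<^sub>R e" for s
  proof -
    have h: "2 *\<^sub>R mul s (star s) = (2 * Bf s s) *\<^sub>R e"
      using Mherm[of s s] unfolding M_def by (simp add: scaleR_2[symmetric] del: scaleR_2)
    show ?thesis using arg_cong[OF h, of "scaleR (1/2)"] by simp
  qed
  have anorm: "alg_norm mul e star s = Bf s s" for s
    unfolding alg_norm_def using Nsq enz by (auto intro!: the_equality)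
  have Badd: "Bf x (y + z) = Bf x y + Bf x z" for x y z
    unfolding Bf_def M_def by (simp add: st.add bb.add_left bb.add_right inner_add_left add_divide_distrib)
  have Bscale: "Bf x (c *\<^sub>R y) = c * Bf x y" for x y c
    unfolding Bf_def M_def by (simp add: st.scale bb.scaleR_left bb.scaleR_right inner_add_left 
       scaleR_add_right[symmetric] del: scaleR_add_right)
  have Badd1: "Bf (x + y) z = Bf x z + Bf y z" for x y z using Badd Bsym by metis
  have Bscale1: "Bf (c *\<^sub>R x) z = c * Bf x z" for x z c using Bscale Bsym by metis
  have Bstar: "Bf (star x) y = Bf (star y) x" for x y
  proof -
    have "star (x + star x) = x + star x" for x by (simp add: st.add inv add.commute)
    then have "\<exists>c. star x = c *\<^sub>R e - x" for x using herm by (metis add_diff_cancel_left')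
    then obtain cx cy where cx: "star x = cx *\<^sub>R e - x" and cy: "star y = cy *\<^sub>R e - y" by metis
    have "M (star x) y = M (star y) x"
      unfolding M_def inv unfolding cx cy
      by (simp add: bb.diff_left bb.diff_right bb.scaleR_left bb.scaleR_right le re algebra_simps)
    then show ?thesis unfolding Bf_def by simp
  qed
  define bv where "bv x = (\<chi> i. Bf x (axis i 1))" for x
  have lin_bv: "linear bv" by (rule linearI) (simp_all add: bv_def vec_eq_iff Badd1 Bscale1)
  interpret bvl: linear bv by (rule lin_bv)
  have Blin2: "linear (Bf x)" for x by (rule linearI) (simp_all add: Badd Bscale)
  have bvinner: "bv x \<bullet> d = Bf x d" for x d
  proof -
    have "Bf x d = Bf x (\<Sum>i\<in>UNIV. d$i *\<^sub>R axis i 1)" using basis_expansion[of d] by (simp add: scalar_mult_eq_scaleR)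
    also have "\<dots> = (\<Sum>i\<in>UNIV. d$i * Bf x (axis i 1))" by (simp add: linear_sum[OF Blin2] Bscale)
    also have "\<dots> = bv x \<bullet> d" by (simp add: inner_vec_def bv_def mult.commute)
    finally show ?thesis by simp
  qed
  have bvinner2: "d \<bullet> bv x = Bf x d" for x d using bvinner inner_commute by metis
  define Q where "Q = matrix bv"
  have Qv: "Q *v x = bv x" for x unfolding Q_def using matrix_apply_lin[OF lin_bv] .
  have QT: "x \<bullet> (Q *v y) = (Q *v x) \<bullet> y" for x y
    by (simp add: Qv bvinner inner_commute[of x] Bsym)
  define L where "L = matrix (\<lambda>x. bv (star x))"
  have linL: "linear (\<lambda>x. bv (star x))" using linear_compose[OF lst lin_bv] by (simp add: o_def)
  have Lv: "L *v x = bv (star x)" for x unfolding L_def using matrix_apply_lin[OF linL] .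
  have LT: "transpose L = L"
    by (simp add: vec_eq_iff transpose_def L_def matrix_def bv_def Bstar)
  define N where "N t = Bf t t" for t
  have Finv: "L *v alg_inv mul e star t = (1 / N t) *\<^sub>R (Q *v t)" for t
    unfolding alg_inv_def anorm Lv N_def Qv by (simp add: st.scale inv bvl.scale)
  have se: "star e = e" using anti[of e "star e"] le inv by metis
  have Ne: "N e = 1"
  proof -
    have "1 *\<^sub>R e = N e *\<^sub>R e" using Nsq[of e] se le unfolding N_def by simp
    then show ?thesis using enz by (metis scaleR_cancel_right)
  qed
  have Ninner: "N t = t \<bullet> (Q *v t)" for t by (simp add: N_def Qv bvinner inner_commute[of t])
  have contN: "continuous_on UNIV N"
    unfolding Ninner[abs_def]
    by (intro continuous_intros linear_continuous_on) (simp add: linear_conv_bounded_linear[symmetric])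
  have "open {t. 0 < N t}" using open_Collect_less[OF continuous_on_const contN] .
  then obtain r where r: "r > 0" "ball e r \<subseteq> {t. 0 < N t}" using Ne by (metis openE mem_Collect_eq zero_less_one)
  have Npos: "0 < N t" if "t \<in> ball e r" for t using r that by blast
  have deriv: "\<exists>F'. ((\<lambda>t. L *v alg_inv mul e star t) has_derivative F') (at s) \<and>
                 (\<forall>i j. F' (axis j 1) $ i = F' (axis i 1) $ j)" if s: "s \<in> ball e r" for s
  proof -
    define F' where "F' h = (1 / N s) *\<^sub>R (Q *v h) + ((- (h \<bullet> (Q *v s)) - s \<bullet> (Q *v h)) / (N s * N s)) *\<^sub>R (Q *v s)" for h
    have bQ: "bounded_linear (\<lambda>x. Q *v x)" by (simp add: linear_conv_bounded_linear[symmetric])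
    have "((\<lambda>t. inverse (t \<bullet> (Q *v t)) *\<^sub>R (Q *v t)) has_derivative F') (at s)"
      unfolding F'_def using Npos[OF s]
      by (auto intro!: derivative_eq_intros bounded_linear.has_derivative[OF bQ] simp: Ninner field_simps power2_eq_square)
    then have "((\<lambda>t. L *v alg_inv mul e star t) has_derivative F') (at s)"
      by (rule has_derivative_transform_within_open[OF _ open_ball s])
         (use Npos in \<open>simp add: Finv Ninner divide_inverse\<close>)
    moreover have "F' (axis j 1) $ i = F' (axis i 1) $ j" for i j
      unfolding F'_def
      by (simp add: cart_eq_inner_axis[of _ i] cart_eq_inner_axis[of _ j] Qv bvinner bvinner2 inner_add_right inner_diff_left inner_scaleR_left Bsym)
    ultimately show ?thesis by blast
  qed
  have norm1: "s \<bullet> (L *v alg_inv mul e star s) = 1" if s: "s \<in> ball e r" for s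
    using Npos[OF s] by (simp add: Finv Ninner)
  have sun: "special_unital_norm mul e star L s = sqrt (alg_norm mul e star s)" if s: "s \<in> ball e r" for s
  proof -
    define d where "d = s - e"
    define p where "p \<tau> = e + \<tau> *\<^sub>R d" for \<tau> :: real
    have pin: "p \<tau> \<in> ball e r" if "\<tau> \<in> {0..1}" for \<tau>
    proof -
      have "dist e (p \<tau>) = \<bar>\<tau>\<bar> * norm d" by (simp add: p_def dist_norm)
      also have "\<dots> \<le> norm d" using that by (auto intro: mult_left_le_one_le)
      also have "\<dots> < r" using s by (simp add: d_def dist_norm norm_minus_commute)
      finally show ?thesis by simp
    qed
    have Np: "N (p \<tau>) = 1 + 2 * \<tau> * Bf e d + \<tau>^2 * Bf d d" for \<tau>
      using Ne unfolding N_def p_def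
      by (simp add: Badd Badd1 Bscale Bscale1 Bsym[of d e] power2_eq_square algebra_simps)
    define g where "g \<tau> = ln (1 + 2 * \<tau> * Bf e d + \<tau>^2 * Bf d d) / 2" for \<tau>
    have gd: "(g has_vector_derivative ((L *v alg_inv mul e star (e + \<tau> *\<^sub>R (s - e))) \<bullet> (s - e)))
               (at \<tau> within {0..1})" if t: "\<tau> \<in> {0..1}" for \<tau>
    proof -
      have pos: "0 < 1 + 2 * \<tau> * Bf e d + \<tau>^2 * Bf d d" using Npos[OF pin[OF t]] Np by simp
      have "(g has_real_derivative (2 * Bf e d + 2 * \<tau> * Bf d d) / (1 + 2 * \<tau> * Bf e d + \<tau>^2 * Bf d d) / 2) (at \<tau>)"
        unfolding g_def using pos
        by (auto intro!: derivative_eq_intros simp: field_simps power2_eq_square)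
      moreover have "(2 * Bf e d + 2 * \<tau> * Bf d d) / (1 + 2 * \<tau> * Bf e d + \<tau>^2 * Bf d d) / 2
          = (L *v alg_inv mul e star (e + \<tau> *\<^sub>R (s - e))) \<bullet> (s - e)"
        unfolding Finv Qv inner_scaleR_left bvinner d_def[symmetric] p_def[symmetric] Np[symmetric]
        unfolding p_def by (simp add: Badd1 Bscale1) (simp add: divide_simps)
      ultimately show ?thesis
        by (simp add: has_real_derivative_iff_has_vector_derivative has_vector_derivative_at_within)
    qed
    have "((\<lambda>\<tau>. (L *v alg_inv mul e star (e + \<tau> *\<^sub>R (s - e))) \<bullet> (s - e)) has_integral (g 1 - g 0)) {0..1}"
      by (rule fundamental_theorem_of_calculus) (auto intro: gd)
    then have I: "integral {0..1} (\<lambda>\<tau>. (L *v alg_inv mul e star (e + \<tau> *\<^sub>R (s - e))) \<bullet> (s - e)) = ln (N s) / 2"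
      using Np[of 1] by (simp add: integral_unique g_def p_def d_def)
    have "exp (ln (N s) / 2) = sqrt (N s)"
      using Npos[OF s] by (simp add: powr_half_sqrt[symmetric] powr_def)
    then show ?thesis unfolding special_unital_norm_def I anorm N_def by simp
  qed
  have ev: "\<forall>\<^sub>F s in nhds e. s \<in> ball e r" using r(1) by (simp add: eventually_nhds_metric) (metis dist_commute)
  show ?thesis
  proof (intro exI conjI)
    show "normalized_uncurling_metric mul e star L"
      unfolding normalized_uncurling_metric_def
    proof (intro conjI)
      show "transpose L = L" by (rule LT)
      have "\<forall>s\<in>ball e r. alg_norm mul e star s \<noteq> 0" using Npos by (metis anorm N_def less_irrefl)
      then show "\<exists>r>0. (\<forall>s\<in>ball e r. alg_norm mul e star s \<noteq> 0) \<and>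
            (\<forall>s\<in>ball e r. \<exists>F'. ((\<lambda>t. L *v alg_inv mul e star t) has_derivative F') (at s) \<and>
                 (\<forall>i j. F' (axis j 1) $ i = F' (axis i 1) $ j))"
        using r(1) deriv by blast
      show "\<forall>\<^sub>F s in nhds e. s \<bullet> (L *v alg_inv mul e star s) = 1"
        using ev by (rule eventually_mono) (rule norm1)
    qed
    show "\<forall>\<^sub>F s in nhds e. special_unital_norm mul e star L s = sqrt (alg_norm mul e star s)"
      using ev sun by (auto elim: eventually_mono)
  qed
qed

end
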